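(* Let $k,\ell_1,\dots,\ell_k$ be positive integers. If $1\le i<k$ and $\ell_{i+1}>1$, then $$|\langle \ell_1,\dots,\ell_{i-1},\ell_i+1,\ell_{i+1}-1,\ell_{i+2},\dots,\ell_k\rangle| = |\langle\ell_1,\dots,\ell_k\rangle| + |\langle \ell_1,\dots,\ell_{i-1}\rangle|\cdot|\langle \ell_{i+1}-1,\ell_{i+2},\dots,\ell_k\rangle|;$$ moreover $$|\langle\ell_1,\dots,\ell_{k-1},\ell_k+1\rangle| = |\langle\ell_1,\dots,\ell_k\rangle| + |\langle\ell_1,\dots,\ell_{k-1}\rangle|;$$ and, if $\ell_1>1$ (and $k\ge 2$), $$|\langle\ell_1-1,\ell_2,\dots,\ell_k\rangle| = |\langle\ell_1,\dots,\ell_k\rangle| - |\langle\ell_1+\ell_2-1,\ell_3,\dots,\ell_k\rangle|.$$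
   Context: For a nonnegative integer $m$ and a tuple $(\ell_1,\dots,\ell_m)$ of integers with partial sums $L_i=\ell_1+\dots+\ell_i$, define $$\langle\ell_1,\dots,\ell_m\rangle=\{(x_0,x_1,\dots,x_m)\in\mathbb Z^{m+1}: x_0=0,\ x_{i-1}<x_i\le L_i \text{ for all } 1\le i\le m\}.$$ For $m=0$ (empty tuple) this set is $\{(0)\}$, of size $1$. *)

theory Defs
  imports Main
begin

text \<open>The tuple (l_1,...,l_m) is the list ls (l_i = ls ! (i-1)); the vector
 (x_0,...,x_m) is a list xs of length m+1 with xs ! j = x_j.
 Partial sum L_i = sum_list (take i ls).\<close>

definition bset :: "int list \<Rightarrow> int list set" where
  "bset ls = {xs. length xs = length ls + 1 \<and> xs ! 0 = 0 \<and>
     (\<forall>i\<in>{1..length ls}. xs ! (i - 1) < xs ! i \<and> xs ! i \<le> sum_list (take i ls))}"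

definition bcard :: "int list \<Rightarrow> int" where
  "bcard ls = int (card (bset ls))"

end

theory Submission
  imports Defs
begin

fun psums :: "int \<Rightarrow> int list \<Rightarrow> int list" where
  "psums c [] = []"
| "psums c (l#ls) = (c+l) # psums (c+l) ls"

definition P :: "int \<Rightarrow> int list \<Rightarrow> int list set" where
  "P c Bs = {ys. length ys = length Bs \<and>
     (\<forall>j<length Bs. (if j = 0 then c else ys!(j-1)) < ys!j \<and> ys!j \<le> Bs!j)}"

definition N :: "int \<Rightarrow> int list \<Rightarrow> int" where
  "N c Bs = int (card (P c Bs))"

lemma P_Nil: "P c [] = {[]}" by (auto simp: P_def)

lemma P_Cons: "P c (b#Bs) = (\<Union>y\<in>{c<..b}. (#) y ` P y Bs)"
proof
  show "P c (b#Bs) \<subseteq> (\<Union>y\<in>{c<..b}. (#) y ` P y Bs)"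
  proof
    fix ys assume A: "ys \<in> P c (b#Bs)"
    then obtain y zs where ys: "ys = y # zs" by (cases ys) (auto simp: P_def)
    from A ys have L: "length zs = length Bs" by (simp add: P_def)
    from A ys have H: "\<forall>j<Suc (length Bs). (if j = 0 then c else (y#zs)!(j-1)) < (y#zs)!j \<and> (y#zs)!j \<le> (b#Bs)!j"
      by (simp add: P_def)
    have y: "c < y \<and> y \<le> b" using H[rule_format, of 0] by simp
    have "zs \<in> P y Bs" unfolding P_def
    proof (intro CollectI conjI allI impI L)
      fix j assume j: "j < length Bs"
      have "(y#zs)!j < zs!j \<and> zs!j \<le> Bs!j" using H[rule_format, of "Suc j"] j by simp
      then show "(if j = 0 then y else zs!(j-1)) < zs!j" "zs!j \<le> Bs!j"
        by (cases j, auto)+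
    qed
    then show "ys \<in> (\<Union>y\<in>{c<..b}. (#) y ` P y Bs)" using y ys by auto
  qed
next
  show "(\<Union>y\<in>{c<..b}. (#) y ` P y Bs) \<subseteq> P c (b#Bs)"
  proof
    fix ys assume "ys \<in> (\<Union>y\<in>{c<..b}. (#) y ` P y Bs)"
    then obtain y zs where ys: "ys = y # zs" and y: "c < y" "y \<le> b" and zs: "zs \<in> P y Bs" by auto
    have L: "length zs = length Bs" using zs by (simp add: P_def)
    have H: "\<forall>j<length Bs. (if j = 0 then y else zs!(j-1)) < zs!j \<and> zs!j \<le> Bs!j"
      using zs by (simp add: P_def)
    show "ys \<in> P c (b#Bs)" unfolding P_def
    proof (intro CollectI conjI allI impI)
      show "length ys = length (b#Bs)" using ys L by simp
      fix j assume j: "j < length (b#Bs)"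
      have "(if j = 0 then c else ys!(j-1)) < ys!j \<and> ys!j \<le> (b#Bs)!j"
      proof (cases j)
        case 0 then show ?thesis using ys y by simp
      next
        case (Suc j')
        then have "j' < length Bs" using j by simp
        then have "(if j' = 0 then y else zs!(j'-1)) < zs!j' \<and> zs!j' \<le> Bs!j'" using H by blast
        then show ?thesis using ys Suc by (cases j') auto
      qed
      then show "(if j = 0 then c else ys!(j-1)) < ys!j" "ys!j \<le> (b#Bs)!j" by auto
    qed
  qed
qed

lemma P_finite: "finite (P c Bs)"
  by (induction Bs arbitrary: c) (auto simp: P_Nil P_Cons)

lemma N_Nil[simp]: "N c [] = 1" by (simp add: N_def P_Nil)

lemma N_Cons: "N c (b#Bs) = (\<Sum>y\<in>{c<..b}. N y Bs)"
proof -
  have "card (P c (b#Bs)) = (\<Sum>y\<in>{c<..b}. card ((#) y ` P y Bs))"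
    unfolding P_Cons by (rule card_UN_disjoint) (auto simp: P_finite)
  also have "\<dots> = (\<Sum>y\<in>{c<..b}. card (P y Bs))"
    by (rule sum.cong) (auto simp: card_image)
  finally show ?thesis by (simp add: N_def)
qed

lemma P_shift: "P (c + d) (map (\<lambda>x. x + d) Bs) = map (\<lambda>x. x + d) ` P c Bs"
proof
  show "P (c + d) (map (\<lambda>x. x + d) Bs) \<subseteq> map (\<lambda>x. x + d) ` P c Bs"
  proof
    fix ys assume A: "ys \<in> P (c + d) (map (\<lambda>x. x + d) Bs)"
    have "map (\<lambda>x. x - d) ys \<in> P c Bs" using A
      by (auto simp: P_def split: if_splits)
    moreover have "ys = map (\<lambda>x. x + d) (map (\<lambda>x. x - d) ys)" by (simp add: map_idI)
    ultimately show "ys \<in> map (\<lambda>x. x + d) ` P c Bs" by blast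
  qed
next
  show "map (\<lambda>x. x + d) ` P c Bs \<subseteq> P (c + d) (map (\<lambda>x. x + d) Bs)"
    by (auto simp: P_def)
qed

lemma N_shift: "N (c + d) (map (\<lambda>x. x + d) Bs) = N c Bs"
proof -
  have "inj_on (map (\<lambda>x::int. x + d)) (P c Bs)"
    by (rule inj_on_subset[OF inj_mapI]) (auto simp: inj_def)
  then show ?thesis by (simp add: N_def P_shift card_image)
qed


lemma psums_append: "psums c (xs @ ys) = psums c xs @ psums (c + sum_list xs) ys"
  by (induction xs arbitrary: c) (auto simp: add.assoc)

lemma psums_shift: "map (\<lambda>x. x + d) (psums c D) = psums (c + d) D"
  by (induction D arbitrary: c) (auto simp: algebra_simps)

lemma psums_nth: "j < length ls \<Longrightarrow> psums c ls ! j = c + sum_list (take (Suc j) ls)"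
  by (induction ls arbitrary: c j) (auto simp: nth_Cons' add.assoc)

lemma psums_length[simp]: "length (psums c ls) = length ls"
  by (induction ls arbitrary: c) auto

lemma psums_le: "\<forall>l\<in>set ls. l > 0 \<Longrightarrow> x \<in> set (psums c ls) \<Longrightarrow> x \<le> c + sum_list ls"
proof (induction ls arbitrary: c)
  case Nil then show ?case by simp
next
  case (Cons l ls)
  have "0 \<le> sum_list ls" using Cons.prems(1) by (intro sum_list_nonneg) auto
  then show ?case using Cons by (auto simp: add.assoc) (metis add.assoc)
qed

lemma bset_eq: "bset ls = (\<lambda>ys. 0 # ys) ` P 0 (psums 0 ls)"
proof
  show "bset ls \<subseteq> (\<lambda>ys. 0 # ys) ` P 0 (psums 0 ls)"
  proof
    fix xs assume A: "xs \<in> bset ls"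
    then obtain x ys where xs: "xs = x # ys" by (cases xs) (auto simp: bset_def)
    have x: "x = 0" using A xs by (simp add: bset_def)
    have L: "length ys = length ls" using A xs by (simp add: bset_def)
    have H: "\<forall>i\<in>{1..length ls}. xs ! (i - 1) < xs ! i \<and> xs ! i \<le> sum_list (take i ls)"
      using A by (simp add: bset_def)
    have "ys \<in> P 0 (psums 0 ls)" unfolding P_def
    proof (intro CollectI conjI allI impI)
      show "length ys = length (psums 0 ls)" using L by simp
      fix j assume j: "j < length (psums 0 ls)"
      then have "Suc j \<in> {1..length ls}" by simp
      from H[rule_format, OF this] have "xs ! j < ys ! j \<and> ys ! j \<le> sum_list (take (Suc j) ls)"
        using xs by simp
      then show "(if j = 0 then 0 else ys ! (j - 1)) < ys ! j" "ys ! j \<le> psums 0 ls ! j"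
        using j xs x psums_nth[of j ls 0] by (cases j; auto)+
    qed
    then show "xs \<in> (\<lambda>ys. 0 # ys) ` P 0 (psums 0 ls)" using xs x by auto
  qed
next
  show "(\<lambda>ys. 0 # ys) ` P 0 (psums 0 ls) \<subseteq> bset ls"
  proof
    fix xs assume "xs \<in> (\<lambda>ys. 0 # ys) ` P 0 (psums 0 ls)"
    then obtain ys where xs: "xs = 0 # ys" and ys: "ys \<in> P 0 (psums 0 ls)" by auto
    have L: "length ys = length ls" using ys by (simp add: P_def)
    have H: "\<forall>j<length ls. (if j = 0 then 0 else ys!(j-1)) < ys!j \<and> ys!j \<le> psums 0 ls ! j"
      using ys by (simp add: P_def)
    show "xs \<in> bset ls" unfolding bset_def
    proof (intro CollectI conjI ballI)
      show "length xs = length ls + 1" using xs L by simp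
      show "xs ! 0 = 0" using xs by simp
      fix i assume i: "i \<in> {1..length ls}"
      then obtain j where ij: "i = Suc j" and j: "j < length ls" by (cases i) auto
      have "(if j = 0 then 0 else ys!(j-1)) < ys!j \<and> ys!j \<le> psums 0 ls ! j" using H j by blast
      then show "xs ! (i - 1) < xs ! i" "xs ! i \<le> sum_list (take i ls)"
        using ij xs psums_nth[OF j, of 0] by (cases j; auto)+
    qed
  qed
qed

lemma bcard_N: "bcard ls = N 0 (psums 0 ls)"
  by (simp add: bcard_def N_def bset_eq card_image)

lemma N_insert:
  assumes "c \<le> b" "\<forall>x\<in>set Bs. x \<le> b"
  shows "N c (Bs @ (b+1) # Cs) = N c (Bs @ b # Cs) + N c Bs * N (b+1) Cs"
  using assms
proof (induction Bs arbitrary: c)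
  case Nil
  have "{c<..b+1} = insert (b+1) {c<..b}" using Nil by auto
  then show ?case by (simp add: N_Cons)
next
  case (Cons b' Bs)
  have "N c ((b' # Bs) @ (b+1) # Cs) = (\<Sum>y\<in>{c<..b'}. N y (Bs @ (b+1) # Cs))"
    by (simp add: N_Cons)
  also have "\<dots> = (\<Sum>y\<in>{c<..b'}. N y (Bs @ b # Cs) + N y Bs * N (b+1) Cs)"
    by (rule sum.cong) (use Cons in auto)
  also have "\<dots> = N c ((b' # Bs) @ b # Cs) + N c (b' # Bs) * N (b+1) Cs"
    by (simp add: N_Cons sum.distrib sum_distrib_right)
  finally show ?case .
qed

lemma N_first:
  assumes "1 \<le> L"
  shows "N 0 (L # R) = N 0 (map (\<lambda>x. x - 1) R) + N 0 (map (\<lambda>x. x - 1) (L # R))"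
proof -
  have e: "{0<..L} = insert 1 {1<..L}" using assms by auto
  have "N 0 (L # R) = N 1 R + N 1 (L # R)"
    by (simp add: N_Cons e)
  moreover have "N 1 X = N 0 (map (\<lambda>x. x - 1) X)" for X
    using N_shift[of 0 1 "map (\<lambda>x. x - 1) X"] by (simp add: comp_def)
  ultimately show ?thesis by simp
qed


lemma part1:
  assumes pos: "\<forall>l\<in>set ls. l > 0" and i: "1 \<le> i" "i < length ls"
  shows "bcard (take (i - 1) ls @ [ls ! (i - 1) + 1, ls ! i - 1] @ drop (i + 1) ls)
           = bcard ls + bcard (take (i - 1) ls) * bcard ((ls ! i - 1) # drop (i + 1) ls)"
proof -
  define A where "A = take (i - 1) ls"
  define a where "a = ls ! (i - 1)"
  define b where "b = ls ! i"
  define D where "D = drop (i + 1) ls"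
  define S where "S = sum_list A"
  have d1: "drop (i - 1) ls = a # drop i ls"
    using i Cons_nth_drop_Suc[of "i - 1" ls] by (simp add: a_def)
  have d2: "drop i ls = b # D"
    using i Cons_nth_drop_Suc[of i ls] by (simp add: b_def D_def)
  have ls: "ls = A @ a # b # D"
    using d1 d2 append_take_drop_id[of "i - 1" ls] by (simp add: A_def)
  have posA: "\<forall>l\<in>set A. l > 0" using pos ls by auto
  have a0: "a > 0" using pos ls by auto
  have S0: "S \<ge> 0" unfolding S_def using posA by (intro sum_list_nonneg) auto
  have p1: "psums 0 ls = psums 0 A @ (S + a) # (S + a + b) # psums (S + a + b) D"
    by (subst ls, simp add: psums_append S_def add.assoc)
  have p2: "psums 0 (A @ [a + 1, b - 1] @ D) = psums 0 A @ (S + a + 1) # (S + a + b) # psums (S + a + b) D"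
    by (simp add: psums_append S_def add.assoc[symmetric])
  have Bs: "\<forall>x\<in>set (psums 0 A). x \<le> S + a"
    using psums_le[OF posA] a0 by (fastforce simp: S_def)
  have ins: "N 0 (psums 0 A @ (S + a + 1) # (S + a + b) # psums (S + a + b) D)
     = N 0 (psums 0 A @ (S + a) # (S + a + b) # psums (S + a + b) D)
       + N 0 (psums 0 A) * N (S + a + 1) ((S + a + b) # psums (S + a + b) D)"
    using N_insert[of 0 "S + a" "psums 0 A" "(S + a + b) # psums (S + a + b) D"] S0 a0 Bs by simp
  have "N (0 + (S + a + 1)) (map (\<lambda>x. x + (S + a + 1)) ((b - 1) # psums (b - 1) D))
      = N 0 ((b - 1) # psums (b - 1) D)" by (rule N_shift)
  moreover have "map (\<lambda>x. x + (S + a + 1)) ((b - 1) # psums (b - 1) D) = (S + a + b) # psums (S + a + b) D"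
    using psums_shift[of "S + a + 1" "b - 1" D] by (simp add: algebra_simps)
  ultimately have sh: "N (S + a + 1) ((S + a + b) # psums (S + a + b) D) = N 0 (psums 0 ((b - 1) # D))"
    by (simp del: list.map)
  show ?thesis
    unfolding bcard_N A_def[symmetric] a_def[symmetric] b_def[symmetric] D_def[symmetric]
    using ins sh p1 p2 by simp
qed

lemma part2:
  assumes pos: "\<forall>l\<in>set ls. l > 0" and ne: "length ls \<ge> 1"
  shows "bcard (butlast ls @ [last ls + 1]) = bcard ls + bcard (butlast ls)"
proof -
  define A where "A = butlast ls"
  define a where "a = last ls"
  define S where "S = sum_list A"
  have "ls \<noteq> []" using ne by auto
  then have ls: "ls = A @ [a]" by (simp add: A_def a_def)
  have posA: "\<forall>l\<in>set A. l > 0" using pos ls by auto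
  have a0: "a > 0" using pos ls by auto
  have S0: "S \<ge> 0" unfolding S_def using posA by (intro sum_list_nonneg) auto
  have Bs: "\<forall>x\<in>set (psums 0 A). x \<le> S + a"
    using psums_le[OF posA] a0 by (fastforce simp: S_def)
  have ins: "N 0 (psums 0 A @ [S + a + 1]) = N 0 (psums 0 A @ [S + a]) + N 0 (psums 0 A) * N (S + a + 1) []"
    using N_insert[of 0 "S + a" "psums 0 A" "[]"] S0 a0 Bs by simp
  have p1: "psums 0 ls = psums 0 A @ [S + a]" by (subst ls, simp add: psums_append S_def)
  have p2: "psums 0 (A @ [a + 1]) = psums 0 A @ [S + a + 1]" by (simp add: psums_append S_def add.assoc)
  show ?thesis unfolding bcard_N A_def[symmetric] a_def[symmetric]
    using ins p1 p2 by simp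
qed

lemma part3:
  assumes pos: "\<forall>l\<in>set ls. l > 0" and len: "length ls \<ge> 2"
  shows "bcard ((ls ! 0 - 1) # tl ls) = bcard ls - bcard ((ls ! 0 + ls ! 1 - 1) # drop 2 ls)"
proof -
  obtain a b D where ls: "ls = a # b # D" using len
    by (metis One_nat_def Suc_1 Suc_le_length_iff)
  have a0: "a \<ge> 1" using pos ls by auto
  have p0: "psums 0 ls = a # (a + b) # psums (a + b) D" using ls by simp
  have p1: "psums 0 ((ls ! 0 - 1) # tl ls) = map (\<lambda>x. x - 1) (a # (a + b) # psums (a + b) D)"
    using ls psums_shift[of "-1" "a + b" D] by (simp add: diff_add_eq)
  have p2: "psums 0 ((ls ! 0 + ls ! 1 - 1) # drop 2 ls) = map (\<lambda>x. x - 1) ((a + b) # psums (a + b) D)"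
    using ls psums_shift[of "-1" "a + b" D] by (simp add: algebra_simps)
  show ?thesis unfolding bcard_N p0 p1 p2 using N_first[OF a0, of "(a + b) # psums (a + b) D"] by simp
qed

theorem lemma4p2:
  fixes ls :: "int list"
  assumes "length ls \<ge> 1"
    and "\<forall>l\<in>set ls. l > 0"
  shows "(\<forall>i. 1 \<le> i \<and> i < length ls \<and> ls ! i > 1 \<longrightarrow>
            bcard (take (i - 1) ls @ [ls ! (i - 1) + 1, ls ! i - 1] @ drop (i + 1) ls)
              = bcard ls + bcard (take (i - 1) ls) * bcard ((ls ! i - 1) # drop (i + 1) ls))
      \<and> bcard (butlast ls @ [last ls + 1]) = bcard ls + bcard (butlast ls)
      \<and> (length ls \<ge> 2 \<and> ls ! 0 > 1 \<longrightarrow>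
            bcard ((ls ! 0 - 1) # tl ls) = bcard ls - bcard ((ls ! 0 + ls ! 1 - 1) # drop 2 ls))"
  using part1[OF assms(2)] part2[OF assms(2,1)] part3[OF assms(2)] by blast

end
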